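(* Let $T$ be a tree with maximum degree $3$ on $n \geq 7$ vertices. Then $GRM_{-2}(T) \geq -\left\lfloor \frac{n-1}{3} \right\rfloor - 2$.
   Context: For a graph $G=(V,E)$ and a real $\lambda$, the general reduced second Zagreb index is $GRM_\lambda(G) = \sum_{uv \in E} (\deg(u)+\lambda)(\deg(v)+\lambda)$, where $\deg(v)$ is the degree of $v$. *)

theory Defs
  imports Complex_Main
begin

definition simple_graph :: "'a set \<Rightarrow> 'a set set \<Rightarrow> bool" where
  "simple_graph V E \<longleftrightarrow> finite V \<and> (\<forall>e\<in>E. e \<subseteq> V \<and> card e = 2)"

definition adj :: "'a set set \<Rightarrow> 'a \<Rightarrow> 'a \<Rightarrow> bool" where
  "adj E u v \<longleftrightarrow> {u, v} \<in> E"

definition degree :: "'a set set \<Rightarrow> 'a \<Rightarrow> nat" where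
  "degree E v = card {e \<in> E. v \<in> e}"

definition max_degree :: "'a set \<Rightarrow> 'a set set \<Rightarrow> nat" where
  "max_degree V E = Max (degree E ` V)"

definition connected_graph :: "'a set \<Rightarrow> 'a set set \<Rightarrow> bool" where
  "connected_graph V E \<longleftrightarrow> (\<forall>u\<in>V. \<forall>v\<in>V. (u, v) \<in> {(x, y). adj E x y}\<^sup>*)"

definition is_cycle :: "'a set set \<Rightarrow> 'a list \<Rightarrow> bool" where
  "is_cycle E cs \<longleftrightarrow> length cs \<ge> 3 \<and> distinct cs
     \<and> (\<forall>i. Suc i < length cs \<longrightarrow> adj E (cs ! i) (cs ! Suc i))
     \<and> adj E (last cs) (hd cs)"

definition acyclic_graph :: "'a set set \<Rightarrow> bool" where
  "acyclic_graph E \<longleftrightarrow> \<not> (\<exists>cs. is_cycle E cs)"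

definition is_tree :: "'a set \<Rightarrow> 'a set set \<Rightarrow> bool" where
  "is_tree V E \<longleftrightarrow> simple_graph V E \<and> V \<noteq> {} \<and> connected_graph V E \<and> acyclic_graph E"

definition GRM :: "real \<Rightarrow> 'a set set \<Rightarrow> real" where
  "GRM lam E = (\<Sum>e\<in>E. \<Prod>v\<in>e. real (degree E v) + lam)"

end

theory Submission
  imports Defs
begin

lemma edges_ge:
  fixes V :: "'a set" and E :: "'a set set"
  assumes sg: "simple_graph V E" and cn: "connected_graph V E" and r: "r \<in> V"
  shows "card V - 1 \<le> card E"
proof -
  define R where "R = {(x, y). adj E x y}"
  have finE: "finite E"
    using sg unfolding simple_graph_def by (meson Pow_iff finite_Pow_iff rev_finite_subset subsetI)
  have finV: "finite V" using sg unfolding simple_graph_def by blast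
  define d where "d v = (LEAST k. (v, r) \<in> R ^^ k)" for v
  have ex: "\<exists>k. (v, r) \<in> R ^^ k" if "v \<in> V" for v
    using cn r that unfolding connected_graph_def R_def by (metis rtrancl_power)
  have dk: "(v, r) \<in> R ^^ d v" if "v \<in> V" for v
    unfolding d_def using ex[OF that] by (rule LeastI_ex)
  have nb: "\<exists>y. adj E v y \<and> d y < d v" if vV: "v \<in> V" "v \<noteq> r" for v
  proof -
    have "d v \<noteq> 0" using dk[OF vV(1)] vV(2) by (metis Pair_inject pair_in_Id_conv relpow.simps(1))
    then obtain k where k: "d v = Suc k" by (cases "d v") auto
    then obtain y where y: "(v, y) \<in> R" "(y, r) \<in> R ^^ k" using dk[OF vV(1)] by (metis relpow_Suc_D2)
    have "d y \<le> k" unfolding d_def using y(2) by (rule Least_le)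
    then show ?thesis using y(1) k unfolding R_def by auto
  qed
  define f where "f v = {v, SOME y. adj E v y \<and> d y < d v}" for v
  have fp: "adj E v (SOME y. adj E v y \<and> d y < d v) \<and> d (SOME y. adj E v y \<and> d y < d v) < d v"
    if "v \<in> V - {r}" for v
    using nb[of v] that by (metis (mono_tags, lifting) DiffD1 DiffD2 insertI1 someI_ex)
  have fE: "f ` (V - {r}) \<subseteq> E" using fp unfolding f_def adj_def by auto
  have inj: "inj_on f (V - {r})"
  proof (rule inj_onI)
    fix u v assume u: "u \<in> V - {r}" and v: "v \<in> V - {r}" and eq: "f u = f v"
    show "u = v"
    proof (rule ccontr)
      assume "u \<noteq> v"
      then have "u = (SOME y. adj E v y \<and> d y < d v)" "v = (SOME y. adj E u y \<and> d y < d u)"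
        using eq unfolding f_def by (auto simp: doubleton_eq_iff)
      then show False using fp[OF u] fp[OF v] by simp
    qed
  qed
  have "card (V - {r}) \<le> card E"
    using card_inj_on_le[OF inj fE finE] .
  then show ?thesis using r finV by simp
qed

lemma double_count:
  fixes V :: "'a set" and E :: "'a set set" and h :: "'a \<Rightarrow> real"
  assumes finV: "finite V" and finE: "finite E" and sub: "\<And>e. e \<in> E \<Longrightarrow> e \<subseteq> V"
  shows "(\<Sum>e\<in>E. \<Sum>v\<in>e. h v) = (\<Sum>v\<in>V. real (degree E v) * h v)"
proof -
  have "(\<Sum>e\<in>E. \<Sum>v\<in>e. h v) = (\<Sum>e\<in>E. \<Sum>v\<in>V. if v \<in> e then h v else 0)"
  proof (rule sum.cong[OF refl])
    fix e assume "e \<in> E"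
    then have "e = {v\<in>V. v \<in> e}" using sub by auto
    then show "(\<Sum>v\<in>e. h v) = (\<Sum>v\<in>V. if v \<in> e then h v else 0)"
      using sum.inter_filter[OF finV, of h "\<lambda>v. v \<in> e"] by simp
  qed
  also have "\<dots> = (\<Sum>v\<in>V. \<Sum>e\<in>E. if v \<in> e then h v else 0)" by (rule sum.swap)
  also have "\<dots> = (\<Sum>v\<in>V. real (degree E v) * h v)"
  proof (rule sum.cong[OF refl])
    fix v
    have "(\<Sum>e\<in>E. if v \<in> e then h v else 0) = (\<Sum>e\<in>{e\<in>E. v \<in> e}. h v)"
      using sum.inter_filter[OF finE, of "\<lambda>_. h v" "\<lambda>e. v \<in> e"] by simp
    then show "(\<Sum>e\<in>E. if v \<in> e then h v else 0) = real (degree E v) * h v"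
      unfolding degree_def by simp
  qed
  finally show ?thesis .
qed

lemma edge_ineq:
  fixes a b :: nat
  assumes "a \<in> {1,2,3}" "b \<in> {1,2,3}"
  shows "3 * ((real a - 2) * (real b - 2)) + 1 - 3 * ((real a - 2) / real a + (real b - 2) / real b) \<ge> 0"
  using assms by auto

theorem theorem3p2:
  fixes V :: "'a set" and E :: "'a set set"
  assumes "is_tree V E"
    and "max_degree V E = 3"
    and "card V \<ge> 7"
  shows "GRM (-2) E \<ge> - real ((card V - 1) div 3) - 2"
proof -
  have sg: "simple_graph V E" and cn: "connected_graph V E" and ne: "V \<noteq> {}"
    using assms(1) unfolding is_tree_def by auto
  have finV: "finite V" using sg unfolding simple_graph_def by blast
  have sub: "\<And>e. e \<in> E \<Longrightarrow> e \<subseteq> V" and c2: "\<And>e. e \<in> E \<Longrightarrow> card e = 2"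
    using sg unfolding simple_graph_def by auto
  have finE: "finite E" using finV sub by (meson Pow_iff finite_Pow_iff rev_finite_subset subsetI)
  obtain r where r: "r \<in> V" using ne by blast
  have Ege: "card V - 1 \<le> card E" using edges_ge[OF sg cn r] .
  have dle: "degree E v \<le> 3" if "v \<in> V" for v
    using assms(2) finV that unfolding max_degree_def by (metis Max_ge finite_imageI imageI)
  have dge: "degree E v \<ge> 1" if "e \<in> E" "v \<in> e" for e v
  proof -
    have "{e \<in> E. v \<in> e} \<noteq> {}" using that by auto
    then show ?thesis unfolding degree_def using finE by (simp add: Suc_leI card_gt_0_iff)
  qed
  define phi where "phi v = (real (degree E v) - 2) / real (degree E v)" for v
  define P where "P e = (\<Prod>v\<in>e. real (degree E v) - 2)" for e
  have pe: "3 * P e + 1 - 3 * (\<Sum>v\<in>e. phi v) \<ge> 0" if eE: "e \<in> E" for e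
  proof -
    obtain u v where e: "e = {u, v}" "u \<noteq> v" using c2[OF eE] by (meson card_2_iff)
    have "degree E u \<in> {1,2,3}" "degree E v \<in> {1,2,3}"
      using dle[of u] dle[of v] dge[OF eE, of u] dge[OF eE, of v] sub[OF eE] e by auto
    from edge_ineq[OF this] show ?thesis unfolding P_def phi_def e using e(2) by simp
  qed
  have "(\<Sum>e\<in>E. 3 * P e + 1 - 3 * (\<Sum>v\<in>e. phi v)) \<ge> 0"
    using pe by (simp add: sum_nonneg)
  then have A: "3 * (\<Sum>e\<in>E. P e) + real (card E) \<ge> 3 * (\<Sum>e\<in>E. \<Sum>v\<in>e. phi v)"
    by (simp add: sum.distrib sum_subtractf sum_distrib_left[symmetric])
  have B: "(\<Sum>e\<in>E. \<Sum>v\<in>e. phi v) = (\<Sum>v\<in>V. real (degree E v) * phi v)"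
    by (rule double_count[OF finV finE sub])
  have C: "(\<Sum>v\<in>V. real (degree E v) * phi v) \<ge> (\<Sum>v\<in>V. real (degree E v) - 2)"
    by (rule sum_mono) (simp add: phi_def)
  have D: "(\<Sum>e\<in>E. \<Sum>v\<in>e. (1::real)) = (\<Sum>v\<in>V. real (degree E v) * 1)"
    by (rule double_count[OF finV finE sub])
  have D2: "(\<Sum>e\<in>E. \<Sum>v\<in>e. (1::real)) = 2 * real (card E)"
    using c2 by simp
  have F: "(\<Sum>v\<in>V. real (degree E v) - 2) = 2 * real (card E) - 2 * real (card V)"
    using D D2 by (simp add: sum_subtractf)
  have G: "3 * (\<Sum>e\<in>E. P e) \<ge> 5 * real (card E) - 6 * real (card V)"
    using A B C F by linarith
  define k where "k = (\<Sum>e\<in>E. \<Prod>v\<in>e. int (degree E v) - 2)"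
  have Pk: "(\<Sum>e\<in>E. P e) = real_of_int k" unfolding k_def P_def by (simp add: of_int_sum of_int_prod)
  have GRMk: "GRM (-2) E = real_of_int k" unfolding GRM_def k_def by (simp add: of_int_sum of_int_prod)
  have "real (card V) - 1 \<le> real (card E)" using Ege assms(3) by linarith
  then have "3 * real_of_int k \<ge> - real (card V) - 5" using G Pk by linarith
  then have H: "3 * k \<ge> - int (card V) - 5" by linarith
  have "k \<ge> - int ((card V - 1) div 3) - 2"
  proof -
    define n where "n = card V"
    have "int ((n - 1) div 3) = (int n - 1) div 3" using assms(3) unfolding n_def
      by (simp add: zdiv_int of_nat_diff)
    moreover have "3 * k \<ge> - int n - 5" using H n_def by simp
    ultimately show ?thesis unfolding n_def[symmetric] by linarith
  qed
  then have "real_of_int k \<ge> real_of_int (- int ((card V - 1) div 3) - 2)" by linarith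
  then show ?thesis unfolding GRMk by simp
qed

end
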